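(* Let $H=H_0+H_{\rm int}$ with $H_0,H_{\rm int}\in\mathbb C^{d\times d}$ Hermitian. Let $\lambda^{(0)}_0\le\dots\le\lambda^{(0)}_{d-1}$ be the eigenvalues of $H_0$ with orthonormal eigenvectors $\ket{\phi^{(0)}_0},\dots,\ket{\phi^{(0)}_{d-1}}$, and for $j\in\{0,\dots,d-1\}$ let $\gamma^{(0)}_j:=\min\{|\lambda^{(0)}_j-\lambda^{(0)}_{j-1}|,|\lambda^{(0)}_j-\lambda^{(0)}_{j+1}|\}$ with $\lambda^{(0)}_{-1}:=-\infty$, $\lambda^{(0)}_d:=\infty$. Let $0<t\le\frac{1}{4\|H\|}$ and $0\le\epsilon\le\|H_{\rm int}\|$, and let $\widetilde U$ be a unitary with $\|\widetilde U-e^{-iHt}\|\le\frac{t\epsilon}{9}$ (and $\frac{t\epsilon}{9}\le\frac13$). Let $\widetilde\lambda_0\le\dots\le\widetilde\lambda_{d-1}$ be the eigenvalues of the effective Hamiltonian $\widetilde H=\frac it\log\widetilde U$ with eigenvectors $\ket{\widetilde\phi_0},\dots,\ket{\widetilde\phi_{d-1}}$. If $\gamma^{(0)}_j>2\|H_{\rm int}\|$, then $$|\langle\widetilde\phi_j|\phi^{(0)}_j\rangle|^2\ge 1-\frac{\pi\|H_{\rm int}\|}{\gamma^{(0)}_j-2\|H_{\rm int}\|}.$$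
   Context: $\|\cdot\|$ is the spectral norm. For a matrix $M$ with $\|M-\mathbb 1\|<1$, $\log M:=\sum_{k=1}^\infty\frac{(-1)^{k+1}}{k}(M-\mathbb 1)^k$; under the hypotheses this converges and the effective Hamiltonian $\widetilde H=\frac it\log\widetilde U$ is Hermitian. *)

theory Defs
  imports "HOL-Analysis.Analysis" "HOL-Library.Extended_Real"
begin

text \<open>Matrices are complex d x d matrices indexed by a finite type 'n, with d = CARD('n).\<close>

definition cinner :: "complex^'n \<Rightarrow> complex^'n \<Rightarrow> complex" where
  "cinner x y = (\<Sum>i\<in>UNIV. cnj (x$i) * y$i)"

definition adjoint_mat :: "complex^'n^'n \<Rightarrow> complex^'n^'n" where
  "adjoint_mat A = (\<chi> i j. cnj (A$j$i))"

definition hermitian :: "complex^'n^'n \<Rightarrow> bool" where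
  "hermitian A \<longleftrightarrow> adjoint_mat A = A"

definition unitary :: "complex^'n^'n \<Rightarrow> bool" where
  "unitary U \<longleftrightarrow> U ** adjoint_mat U = mat 1 \<and> adjoint_mat U ** U = mat 1"

definition cscale :: "complex \<Rightarrow> complex^'n^'m \<Rightarrow> complex^'n^'m" where
  "cscale c A = (\<chi> i j. c * A$i$j)"

definition spec_norm :: "complex^'n^'n \<Rightarrow> real" where
  "spec_norm A = onorm (\<lambda>x. A *v x)"

fun mpow :: "complex^'n^'n \<Rightarrow> nat \<Rightarrow> complex^'n^'n" where
  "mpow A 0 = mat 1"
| "mpow A (Suc k) = A ** mpow A k"

definition mexp :: "complex^'n^'n \<Rightarrow> complex^'n^'n" where
  "mexp A = (\<Sum>k. cscale (1 / of_nat (fact k)) (mpow A k))"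

definition mlog :: "complex^'n^'n \<Rightarrow> complex^'n^'n" where
  "mlog M = (\<Sum>k. cscale ((-1) ^ k / of_nat (Suc k)) (mpow (M - mat 1) (Suc k)))"

definition sorted_eigensystem ::
  "complex^'n^'n \<Rightarrow> (nat \<Rightarrow> real) \<Rightarrow> (nat \<Rightarrow> complex^'n) \<Rightarrow> bool" where
  "sorted_eigensystem A lam phi \<longleftrightarrow>
     (\<forall>i j. i \<le> j \<and> j < CARD('n) \<longrightarrow> lam i \<le> lam j) \<and>
     (\<forall>i < CARD('n). A *v phi i = complex_of_real (lam i) *s phi i) \<and>
     (\<forall>i < CARD('n). \<forall>j < CARD('n). cinner (phi i) (phi j) = (if i = j then 1 else 0))"

definition gap :: "nat \<Rightarrow> (nat \<Rightarrow> real) \<Rightarrow> nat \<Rightarrow> ereal" where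
  "gap d lam j = min (if j = 0 then \<infinity> else ereal \<bar>lam j - lam (j - 1)\<bar>)
                     (if j + 1 = d then \<infinity> else ereal \<bar>lam j - lam (j + 1)\<bar>)"

end

theory Submission
  imports Defs "HOL-Complex_Analysis.Weierstrass_Factorization"
begin

lemma cinner_add_right: "cinner x (y + z) = cinner x y + cinner x z"
  by (simp add: cinner_def sum.distrib algebra_simps)
lemma cinner_diff_right: "cinner x (y - z) = cinner x y - cinner x z"
  by (simp add: cinner_def sum_subtractf algebra_simps)
lemma cinner_add_left: "cinner (x + y) z = cinner x z + cinner y z"
  by (simp add: cinner_def sum.distrib algebra_simps)
lemma cinner_diff_left: "cinner (x - y) z = cinner x z - cinner y z"
  by (simp add: cinner_def sum_subtractf algebra_simps)
lemma cinner_scale_right: "cinner x (c *s y) = c * cinner x y"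
  by (simp add: cinner_def sum_distrib_left algebra_simps)
lemma cinner_scale_left: "cinner (c *s x) y = cnj c * cinner x y"
  by (simp add: cinner_def sum_distrib_left algebra_simps)
lemma cinner_sum_right: "cinner x (sum f A) = (\<Sum>a\<in>A. cinner x (f a))"
  unfolding cinner_def by (simp add: sum_component sum_distrib_left) (rule sum.swap)
lemma cinner_sum_left: "cinner (sum f A) x = (\<Sum>a\<in>A. cinner (f a) x)"
  unfolding cinner_def by (simp add: sum_component sum_distrib_right) (rule sum.swap)
lemma cinner_zero_right[simp]: "cinner x 0 = 0" by (simp add: cinner_def)
lemma cinner_zero_left[simp]: "cinner 0 x = 0" by (simp add: cinner_def)
lemma cinner_commute: "cinner y x = cnj (cinner x y)"
  by (simp add: cinner_def mult.commute)

lemma norm_sq_vec: "(norm (x::complex^'n))^2 = (\<Sum>i\<in>UNIV. (cmod (x$i))^2)"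
  by (simp add: norm_vec_def L2_set_def sum_nonneg)

lemma cinner_self: "cinner x x = complex_of_real ((norm x)^2)"
proof -
  have "cinner x x = (\<Sum>i\<in>UNIV. complex_of_real ((cmod (x$i))^2))"
    unfolding cinner_def by (rule sum.cong) (auto simp only: complex_norm_square mult.commute)
  then show ?thesis by (simp only: norm_sq_vec of_real_sum)
qed

lemma cinner_self_eq_0: "cinner x x = 0 \<longleftrightarrow> x = 0"
  by (simp add: cinner_self)

lemma cauchy_schwarz: fixes x y :: "complex^'n" shows "cmod (cinner x y) \<le> norm x * norm y"
proof -
  define a :: "real^'n" where "a = (\<chi> i. cmod (x$i))"
  define b :: "real^'n" where "b = (\<chi> i. cmod (y$i))"
  have na: "norm a = norm x" unfolding a_def norm_vec_def by simp
  have nb: "norm b = norm y" unfolding b_def norm_vec_def by simp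
  have "cmod (cinner x y) \<le> (\<Sum>i\<in>UNIV. cmod (cnj (x$i) * y$i))"
    unfolding cinner_def by (rule norm_sum)
  also have "\<dots> = inner a b" unfolding a_def b_def inner_vec_def by (simp add: norm_mult)
  also have "\<dots> \<le> norm a * norm b" by (rule norm_cauchy_schwarz)
  finally show ?thesis using na nb by simp
qed

lemma mv_bl: "bounded_linear (\<lambda>x. (A::complex^'n^'m) *v x)"
  using linear_conv_bounded_linear matrix_vector_mul_linear by blast

lemma spec_norm_bound: "norm (A *v x) \<le> spec_norm A * norm x"
  unfolding spec_norm_def by (rule onorm[OF mv_bl])

lemma spec_norm_le: "(\<And>x. norm (A *v x) \<le> K * norm x) \<Longrightarrow> spec_norm A \<le> K"
  unfolding spec_norm_def by (rule onorm_le)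

lemma spec_norm_nonneg: "0 \<le> spec_norm A"
  unfolding spec_norm_def by (rule onorm_pos_le[OF mv_bl])

lemma cscale_mv: "cscale c A *v x = c *s (A *v x)"
  by (simp add: cscale_def matrix_vector_mult_def vec_eq_iff sum_distrib_left mult.assoc)


lemma norm_cvec_scale: "norm (c *s (x::complex^'n)) = cmod c * norm x"
  unfolding norm_vec_def L2_set_def
  by (simp add: norm_mult power_mult_distrib sum_distrib_left[symmetric] real_sqrt_mult)

lemma entry_le_spec: fixes A :: "complex^'n^'n" shows "cmod (A$i$j) \<le> spec_norm A"
proof -
  have "A$i$j = (A *v axis j (1::complex))$i"
    by (simp add: matrix_vector_mult_def axis_def if_distrib cong: if_cong)
  also have "cmod \<dots> \<le> norm (A *v axis j (1::complex))" by (rule Finite_Cartesian_Product.norm_nth_le)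
  also have "\<dots> \<le> spec_norm A * norm (axis j (1::complex))" by (rule spec_norm_bound)
  also have "norm (axis j (1::complex)) = 1"
  proof -
    have "(\<Sum>i\<in>UNIV. (norm (axis j (1::complex) $ i))^2) = (\<Sum>i\<in>UNIV. if i = j then 1 else 0)"
      by (rule sum.cong) (auto simp: axis_def)
    then show ?thesis unfolding norm_vec_def L2_set_def by simp
  qed
  finally show ?thesis by simp
qed

lemma norm_vec_le_sum: "norm (x::'a::real_normed_vector^'n) \<le> (\<Sum>i\<in>UNIV. norm (x$i))"
  unfolding norm_vec_def by (rule L2_set_le_sum) auto

lemma norm_le_spec: "norm (A::complex^'n^'n) \<le> real CARD('n) * real CARD('n) * spec_norm A"
proof -
  have "norm A \<le> (\<Sum>i\<in>UNIV. norm (A$i))" by (rule norm_vec_le_sum)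
  also have "\<dots> \<le> (\<Sum>i\<in>(UNIV::'n set). \<Sum>j\<in>(UNIV::'n set). cmod (A$i$j))"
    by (rule sum_mono) (rule norm_vec_le_sum)
  also have "\<dots> \<le> (\<Sum>i\<in>(UNIV::'n set). \<Sum>j\<in>(UNIV::'n set). spec_norm A)"
    by (intro sum_mono entry_le_spec)
  finally show ?thesis by simp
qed

lemma spec_norm_mult: "spec_norm (A ** B) \<le> spec_norm A * spec_norm B"
proof (rule spec_norm_le)
  fix x
  have "norm ((A ** B) *v x) = norm (A *v (B *v x))" by (simp add: matrix_vector_mul_assoc)
  also have "\<dots> \<le> spec_norm A * norm (B *v x)" by (rule spec_norm_bound)
  also have "\<dots> \<le> spec_norm A * (spec_norm B * norm x)"
    by (intro mult_left_mono spec_norm_bound spec_norm_nonneg)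
  finally show "norm ((A ** B) *v x) \<le> spec_norm A * spec_norm B * norm x" by (simp add: mult.assoc)
qed

lemma spec_norm_add: "spec_norm (A + B) \<le> spec_norm A + spec_norm B"
proof (rule spec_norm_le)
  fix x
  have "norm ((A + B) *v x) \<le> norm (A *v x) + norm (B *v x)"
    by (simp add: matrix_vector_mult_add_rdistrib norm_triangle_ineq)
  also have "\<dots> \<le> spec_norm A * norm x + spec_norm B * norm x"
    by (intro add_mono spec_norm_bound)
  finally show "norm ((A + B) *v x) \<le> (spec_norm A + spec_norm B) * norm x" by (simp add: algebra_simps)
qed

lemma spec_norm_diff: "spec_norm (A - B) \<le> spec_norm A + spec_norm B"
proof (rule spec_norm_le)
  fix x
  have "norm ((A - B) *v x) \<le> norm (A *v x) + norm (B *v x)"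
    by (simp add: matrix_vector_mult_diff_rdistrib norm_triangle_ineq4)
  also have "\<dots> \<le> spec_norm A * norm x + spec_norm B * norm x"
    by (intro add_mono spec_norm_bound)
  finally show "norm ((A - B) *v x) \<le> (spec_norm A + spec_norm B) * norm x" by (simp add: algebra_simps)
qed

lemma spec_norm_cscale: "spec_norm (cscale c A) \<le> cmod c * spec_norm A"
proof (rule spec_norm_le)
  fix x
  have "norm (cscale c A *v x) = cmod c * norm (A *v x)" by (simp add: cscale_mv norm_cvec_scale)
  also have "\<dots> \<le> cmod c * (spec_norm A * norm x)" by (intro mult_left_mono spec_norm_bound) auto
  finally show "norm (cscale c A *v x) \<le> cmod c * spec_norm A * norm x" by (simp add: mult.assoc)
qed

lemma spec_norm_mpow: "spec_norm (mpow A k) \<le> spec_norm A ^ k"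
proof (induction k)
  case 0
  show ?case by simp (rule spec_norm_le, simp)
next
  case (Suc k)
  have "spec_norm (mpow A (Suc k)) \<le> spec_norm A * spec_norm (mpow A k)" by (simp add: spec_norm_mult)
  also have "\<dots> \<le> spec_norm A * spec_norm A ^ k" by (intro mult_left_mono Suc spec_norm_nonneg)
  finally show ?case by simp
qed

lemma mpow_eigen: "A *v v = c *s v \<Longrightarrow> mpow A k *v v = c^k *s v"
  by (induction k) (simp_all add: matrix_vector_mul_assoc[symmetric] vec.scale)

lemma cinner_adjoint: "cinner (A *v x) y = cinner x (adjoint_mat A *v y)"
  unfolding cinner_def adjoint_mat_def matrix_vector_mult_def
  by (simp add: sum_distrib_left sum_distrib_right mult_ac) (rule sum.swap)

lemma hermitian_cinner: "hermitian A \<Longrightarrow> cinner (A *v x) y = cinner x (A *v y)"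
  unfolding hermitian_def by (metis cinner_adjoint)

definition orthonormal :: "(nat \<Rightarrow> complex^'n) \<Rightarrow> nat \<Rightarrow> bool" where
  "orthonormal v m \<longleftrightarrow> (\<forall>i<m. \<forall>j<m. cinner (v i) (v j) = (if i = j then 1 else 0))"

lemma idx_bij: obtains g :: "'n::finite \<Rightarrow> nat" where "bij_betw g UNIV {..<CARD('n)}"
  using finite_same_card_bij[of "UNIV::'n set" "{..<CARD('n)}"] by auto

lemma mv_cinner_rows:
  "((\<chi> r. \<chi> k. cnj (w r $ k)) *v x) $ r = cinner (w r) (x::complex^'n)"
  by (simp add: matrix_vector_mult_def cinner_def)

lemma ex_orth:
  fixes w :: "nat \<Rightarrow> complex^'n"
  assumes "m < CARD('n)"
  shows "\<exists>x. x \<noteq> 0 \<and> (\<forall>i<m. cinner (w i) x = 0)"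
proof -
  obtain g :: "'n \<Rightarrow> nat" where g: "bij_betw g UNIV {..<CARD('n)}" by (rule idx_bij)
  define w' where "w' r = (if g r < m then w (g r) else 0)" for r
  define M :: "complex^'n^'n" where "M = (\<chi> r. \<chi> k. cnj (w' r $ k))"
  obtain r0 where r0: "g r0 = m" using g assms by (metis bij_betw_iff_bijections lessThan_iff)
  have "\<not> surj ((*v) M)"
  proof
    assume "surj ((*v) M)"
    then obtain y where "M *v y = axis r0 1" by (metis surjD)
    then have "(M *v y) $ r0 = 1" by (simp add: axis_def)
    moreover have "(M *v y) $ r0 = 0" unfolding M_def mv_cinner_rows by (simp add: w'_def r0)
    ultimately show False by simp
  qed
  then have "\<not> inj ((*v) M)" using vec.linear_inj_imp_surj[OF matrix_vector_mul_linear_gen] by blast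
  then obtain a b where ab: "a \<noteq> b" "M *v a = M *v b" unfolding inj_def by blast
  define x where "x = a - b"
  have x0: "x \<noteq> 0" using ab by (simp add: x_def)
  have Mx: "M *v x = 0" using ab by (simp add: x_def matrix_vector_mult_diff_distrib)
  have "cinner (w i) x = 0" if "i < m" for i
  proof -
    have "i \<in> g ` UNIV" using g that assms by (auto simp: bij_betw_def)
    then obtain r where r: "g r = i" by blast
    have "cinner (w i) x = (M *v x) $ r" unfolding M_def mv_cinner_rows by (simp add: w'_def r that)
    then show ?thesis using Mx by simp
  qed
  then show ?thesis using x0 by blast
qed

lemma orth_complete:
  fixes v :: "nat \<Rightarrow> complex^'n"
  assumes on: "orthonormal v CARD('n)" and y: "\<And>i. i < CARD('n) \<Longrightarrow> cinner (v i) y = 0"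
  shows "y = 0"
proof -
  obtain g :: "'n \<Rightarrow> nat" where g: "bij_betw g UNIV {..<CARD('n)}" by (rule idx_bij)
  define M :: "complex^'n^'n" where "M = (\<chi> r. \<chi> k. cnj (v (g r) $ k))"
  have gi: "g r < CARD('n)" for r using g by (auto simp: bij_betw_def)
  have ginj: "g r = g s \<longleftrightarrow> r = s" for r s using g by (auto simp: bij_betw_def inj_def)
  have "surj ((*v) M)"
  proof
    show "range ((*v) M) \<subseteq> UNIV" by simp
    show "UNIV \<subseteq> range ((*v) M)"
    proof
      fix b :: "complex^'n"
      define z where "z = (\<Sum>s\<in>UNIV. b$s *s v (g s))"
      have "(M *v z) $ r = b $ r" for r
      proof -
        have "(M *v z) $ r = cinner (v (g r)) z" unfolding M_def by (rule mv_cinner_rows)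
        also have "\<dots> = (\<Sum>s\<in>UNIV. b$s * cinner (v (g r)) (v (g s)))"
          unfolding z_def by (simp add: cinner_sum_right cinner_scale_right)
        also have "\<dots> = (\<Sum>s\<in>UNIV. if s = r then b$s else 0)"
          by (rule sum.cong) (use on gi ginj in \<open>auto simp: orthonormal_def\<close>)
        also have "\<dots> = b $ r" by simp
        finally show ?thesis .
      qed
      then have "M *v z = b" by (simp add: vec_eq_iff)
      then show "b \<in> range ((*v) M)" by (metis rangeI)
    qed
  qed
  then have "inj ((*v) M)" using vec.linear_surj_imp_inj[OF matrix_vector_mul_linear_gen] by blast
  moreover have "M *v y = 0"
    by (simp add: vec_eq_iff M_def mv_cinner_rows y gi)
  ultimately show "y = 0" by (metis injD matrix_vector_mult_0_right)
qed

lemma parseval_expand: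
  fixes v :: "nat \<Rightarrow> complex^'n"
  assumes on: "orthonormal v CARD('n)"
  shows "x = (\<Sum>i<CARD('n). cinner (v i) x *s v i)"
proof -
  define y where "y = x - (\<Sum>i<CARD('n). cinner (v i) x *s v i)"
  have "cinner (v k) y = 0" if k: "k < CARD('n)" for k
  proof -
    have "cinner (v k) (\<Sum>i<CARD('n). cinner (v i) x *s v i)
          = (\<Sum>i<CARD('n). if i = k then cinner (v i) x else 0)"
      unfolding cinner_sum_right cinner_scale_right
      by (rule sum.cong) (use on k in \<open>auto simp: orthonormal_def\<close>)
    then show ?thesis using k by (simp add: y_def cinner_diff_right)
  qed
  then have "y = 0" by (rule orth_complete[OF on])
  then show ?thesis by (simp add: y_def)
qed

lemma parseval_norm:
  fixes v :: "nat \<Rightarrow> complex^'n"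
  assumes on: "orthonormal v CARD('n)"
  shows "(norm x)^2 = (\<Sum>i<CARD('n). (cmod (cinner (v i) x))^2)"
proof -
  have "complex_of_real ((norm x)^2) = cinner x x" by (simp add: cinner_self)
  also have "\<dots> = cinner (\<Sum>i<CARD('n). cinner (v i) x *s v i) x"
    by (rule arg_cong[where f="\<lambda>y. cinner y x", OF parseval_expand[OF on]])
  also have "\<dots> = (\<Sum>i<CARD('n). cnj (cinner (v i) x) * cinner (v i) x)"
    by (simp add: cinner_sum_left cinner_scale_left)
  also have "\<dots> = (\<Sum>i<CARD('n). complex_of_real ((cmod (cinner (v i) x))^2))"
    by (rule sum.cong) (auto simp only: complex_norm_square mult.commute)
  finally show ?thesis by (simp only: of_real_sum[symmetric] of_real_eq_iff)
qed

lemma quad_form: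
  fixes v :: "nat \<Rightarrow> complex^'n"
  assumes on: "orthonormal v CARD('n)"
    and ev: "\<And>i. i < CARD('n) \<Longrightarrow> A *v v i = complex_of_real (mu i) *s v i"
  shows "cinner x (A *v x) = complex_of_real (\<Sum>i<CARD('n). mu i * (cmod (cinner (v i) x))^2)"
proof -
  have "A *v x = A *v (\<Sum>i<CARD('n). cinner (v i) x *s v i)"
    by (rule arg_cong[where f="\<lambda>y. A *v y", OF parseval_expand[OF on]])
  also have "\<dots> = (\<Sum>i<CARD('n). cinner (v i) x *s (A *v v i))"
    by (simp add: vec.sum vec.scale)
  also have "\<dots> = (\<Sum>i<CARD('n). (cinner (v i) x * complex_of_real (mu i)) *s v i)"
    by (rule sum.cong) (auto simp: ev)
  finally have "cinner x (A *v x) = (\<Sum>i<CARD('n). cinner (v i) x * complex_of_real (mu i) * cinner x (v i))"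
    by (simp add: cinner_sum_right cinner_scale_right)
  also have "\<dots> = (\<Sum>i<CARD('n). complex_of_real (mu i * (cmod (cinner (v i) x))^2))"
  proof (rule sum.cong)
    fix i
    have "cinner (v i) x * complex_of_real (mu i) * cinner x (v i)
        = complex_of_real (mu i) * (cinner (v i) x * cnj (cinner (v i) x))"
      by (subst cinner_commute[of x]) (simp add: mult_ac)
    then show "cinner (v i) x * complex_of_real (mu i) * cinner x (v i) = complex_of_real (mu i * (cmod (cinner (v i) x))^2)"
      by (simp only: complex_norm_square[symmetric] of_real_mult)
  qed simp
  finally show ?thesis by (simp only: of_real_sum)
qed

lemma continuous_cinner_right: "continuous_on S (\<lambda>x. cinner w (x::complex^'n))"
  unfolding cinner_def by (intro continuous_intros continuous_on_compose2[OF continuous_on_id]) (auto intro: linear_continuous_on bounded_linear_vec_nth)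

lemma hermitian_real: "hermitian H \<Longrightarrow> cinner x (H *v x) = complex_of_real (Re (cinner x (H *v x)))"
proof -
  assume h: "hermitian H"
  have "cinner x (H *v x) = cnj (cinner x (H *v x))"
    using hermitian_cinner[OF h, of x x] cinner_commute[of "H *v x" x] by simp
  then have "Im (cinner x (H *v x)) = 0" by (metis Reals_cnj_iff complex_is_Real_iff)
  then show ?thesis by (simp add: complex_eq_iff)
qed

lemma real_contra: fixes a b :: real assumes "\<And>s. 0 < s \<Longrightarrow> 2 * s * a \<le> s^2 * b" shows "a \<le> 0"
proof (rule ccontr)
  assume a: "\<not> a \<le> 0"
  define s where "s = a / (\<bar>b\<bar> + 1)"
  have s: "0 < s" using a by (simp add: s_def)
  have "2 * s * a \<le> s^2 * b" using assms[OF s] .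
  then have "2*a \<le> s * b" using s by (simp add: power2_eq_square mult_ac)
  also have "\<dots> \<le> s * \<bar>b\<bar>" using s by (simp add: mult_left_mono)
  also have "\<dots> < a" using a by (simp add: s_def field_simps)
  finally show False using a by simp
qed

lemma eigvec_step:
  fixes H :: "complex^'n^'n" and v :: "nat \<Rightarrow> complex^'n"
  assumes h: "hermitian H" and k: "k < CARD('n)"
    and on: "orthonormal v k" and ev: "\<And>i. i < k \<Longrightarrow> H *v v i = complex_of_real (mu i) *s v i"
  shows "\<exists>x q. norm x = 1 \<and> (\<forall>i<k. cinner (v i) x = 0) \<and> H *v x = complex_of_real q *s x"
proof -
  define W where "W = {x::complex^'n. \<forall>i<k. cinner (v i) x = 0}"
  define S where "S = W \<inter> {x. norm x = 1}"
  define f where "f x = Re (cinner x (H *v x))" for x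
  have Weq: "W = (\<Inter>i\<in>{..<k}. {x. cinner (v i) x = 0})" by (auto simp: W_def)
  have Wc: "closed W" unfolding Weq
    by (intro closed_INT ballI closed_Collect_eq continuous_cinner_right continuous_on_const)
  have S_eq: "S = W \<inter> sphere 0 1" by (auto simp: S_def)
  have Sc: "compact S" unfolding S_eq by (intro closed_Int_compact Wc compact_sphere)
  obtain x1 where x1: "x1 \<noteq> 0" "\<forall>i<k. cinner (v i) x1 = 0" using ex_orth[OF k] by blast
  define x2 where "x2 = complex_of_real (1 / norm x1) *s x1"
  have "x2 \<in> S" using x1 by (simp add: x2_def S_def W_def norm_cvec_scale cinner_scale_right norm_divide)
  then have Sne: "S \<noteq> {}" by blast
  have cont_mv: "continuous_on UNIV (\<lambda>x. H *v x)" by (rule linear_continuous_on[OF mv_bl])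
  have cont_nth: "continuous_on UNIV (\<lambda>x. (x::complex^'n) $ i)" for i
    by (rule linear_continuous_on[OF bounded_linear_vec_nth])
  have fc: "continuous_on S f" unfolding f_def cinner_def
    by (intro continuous_intros continuous_on_compose2[OF cont_nth cont_mv] continuous_on_subset[OF cont_nth]) auto
  obtain x0 where x0S: "x0 \<in> S" and x0max: "\<And>y. y \<in> S \<Longrightarrow> f y \<le> f x0"
    using continuous_attains_sup[OF Sc Sne fc] by blast
  define q where "q = f x0"
  have x0W: "\<forall>i<k. cinner (v i) x0 = 0" and nx0: "norm x0 = 1" using x0S by (auto simp: S_def W_def)
  have fscale: "f (c *s x) = (cmod c)^2 * f x" for c x
  proof -
    have "cinner (c *s x) (H *v (c *s x)) = (c * cnj c) * cinner x (H *v x)"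
      by (simp add: vec.scale cinner_scale_left cinner_scale_right mult_ac)
    also have "\<dots> = complex_of_real ((cmod c)^2) * cinner x (H *v x)" by (simp only: complex_norm_square)
    finally show ?thesis unfolding f_def by simp
  qed
  have maxW: "f x \<le> q * (norm x)^2" if "\<forall>i<k. cinner (v i) x = 0" "x \<noteq> 0" for x
  proof -
    define y where "y = complex_of_real (1 / norm x) *s x"
    have "y \<in> S" using that by (simp add: y_def S_def W_def norm_cvec_scale cinner_scale_right norm_divide)
    then have "f y \<le> q" using x0max q_def by simp
    moreover have "f y = f x / (norm x)^2" by (simp add: y_def fscale power_divide norm_divide)
    ultimately show ?thesis using that by (simp add: field_simps)
  qed
  have q_eq: "cinner x0 (H *v x0) = complex_of_real q" using hermitian_real[OF h] q_def f_def by simp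
  define z where "z = H *v x0 - complex_of_real q *s x0"
  have Hx0: "H *v x0 = z + complex_of_real q *s x0" by (simp add: z_def)
  have zW: "cinner (v i) z = 0" if "i < k" for i
  proof -
    have "cinner (v i) (H *v x0) = cinner (H *v v i) x0" using hermitian_cinner[OF h] by simp
    also have "\<dots> = 0" using ev[OF that] x0W that by (simp add: cinner_scale_left)
    finally show ?thesis using x0W that by (simp add: z_def cinner_diff_right cinner_scale_right)
  qed
  have x0x0: "cinner x0 x0 = 1" using nx0 by (simp add: cinner_self)
  have x0z: "cinner x0 z = 0" by (simp add: z_def cinner_diff_right cinner_scale_right q_eq x0x0)
  have zx0: "cinner z x0 = 0" using x0z cinner_commute[of x0 z] by simp
  define a where "a = (norm z)^2"
  have zz: "cinner z z = complex_of_real a" by (simp add: a_def cinner_self)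
  have zHx0: "cinner z (H *v x0) = complex_of_real a"
    by (simp add: Hx0 cinner_add_right cinner_scale_right zx0 zz)
  have x0Hz: "cinner x0 (H *v z) = complex_of_real a"
    using hermitian_cinner[OF h, of x0 z] by (simp add: Hx0 cinner_add_left cinner_scale_left x0z zz)
  have "2 * s * a \<le> s^2 * (q * a - f z)" if s: "0 < s" for s
  proof -
    define c where "c = complex_of_real s"
    define xs where "xs = x0 + c *s z"
    have xsW: "\<forall>i<k. cinner (v i) xs = 0" using x0W zW by (simp add: xs_def cinner_add_right cinner_scale_right)
    have "cinner xs xs = complex_of_real (1 + s^2 * a)"
      by (simp add: xs_def c_def cinner_add_left cinner_add_right cinner_scale_left cinner_scale_right x0x0 x0z zx0 zz power2_eq_square)
    then have nxs: "(norm xs)^2 = 1 + s^2 * a" using cinner_self[of xs] by (metis of_real_eq_iff)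
    then have "xs \<noteq> 0" using a_def by (metis add_le_same_cancel2 norm_zero not_one_le_zero power_zero_numeral zero_le_power2 mult_nonneg_nonneg zero_le_mult_iff)
    then have le: "f xs \<le> q * (1 + s^2 * a)" using maxW[OF xsW] nxs by simp
    have "cinner xs (H *v xs) = complex_of_real q + complex_of_real (2 * s * a) + complex_of_real (s^2) * cinner z (H *v z)"
      by (simp add: xs_def c_def vec.add vec.scale cinner_add_left cinner_add_right cinner_scale_left cinner_scale_right q_eq zHx0 x0Hz power2_eq_square algebra_simps)
    then have "f xs = q + 2 * s * a + s^2 * f z" by (simp add: f_def)
    then show ?thesis using le by (simp add: algebra_simps)
  qed
  then have "a \<le> 0" by (rule real_contra)
  then have "z = 0" by (simp add: a_def)
  then have "H *v x0 = complex_of_real q *s x0" using Hx0 by simp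
  then show ?thesis using nx0 x0W by blast
qed

lemma spectral_aux:
  fixes H :: "complex^'n^'n"
  assumes h: "hermitian H"
  shows "k \<le> CARD('n) \<Longrightarrow> \<exists>v mu. orthonormal v k \<and> (\<forall>i<k. H *v v i = complex_of_real (mu i) *s v i)"
proof (induction k)
  case 0
  show ?case by (simp add: orthonormal_def)
next
  case (Suc k)
  then obtain v mu where on: "orthonormal v k" and ev: "\<forall>i<k. H *v v i = complex_of_real (mu i) *s v i" by auto
  obtain x q where x: "norm x = 1" "\<forall>i<k. cinner (v i) x = 0" "H *v x = complex_of_real q *s x"
    using eigvec_step[OF h _ on] ev Suc.prems by (metis Suc_le_lessD)
  define v' where "v' = v(k := x)"
  define mu' where "mu' = mu(k := q)"
  have "orthonormal v' (Suc k)"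
    unfolding orthonormal_def
  proof (intro allI impI)
    fix i j assume i: "i < Suc k" and j: "j < Suc k"
    show "cinner (v' i) (v' j) = (if i = j then 1 else 0)"
      using on x i j cinner_commute[of x "v i" for i] unfolding orthonormal_def v'_def
      by (cases "i = k"; cases "j = k") (auto simp: cinner_self less_Suc_eq)
  qed
  moreover have "\<forall>i<Suc k. H *v v' i = complex_of_real (mu' i) *s v' i"
    using ev x by (auto simp: v'_def mu'_def less_Suc_eq)
  ultimately show ?case by blast
qed

lemma spectral:
  fixes H :: "complex^'n^'n"
  assumes h: "hermitian H"
  obtains v mu where "orthonormal v CARD('n)" "\<And>i. i < CARD('n) \<Longrightarrow> H *v v i = complex_of_real (mu i) *s v i"
  using spectral_aux[OF h, of "CARD('n)"] by auto

lemma mv_left_bl: "bounded_linear (\<lambda>M::complex^'n^'n. M *v x)"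
proof -
  have "linear (\<lambda>M::complex^'n^'n. M *v x)"
    by (rule linearI) (simp_all add: vec_eq_iff matrix_vector_mult_def sum.distrib algebra_simps scaleR_sum_right)
  then show ?thesis using linear_conv_bounded_linear by blast
qed

lemma svec_bl: "bounded_linear (\<lambda>a::complex. a *s (v::complex^'n))"
proof -
  have "linear (\<lambda>a::complex. a *s v)"
    by (rule linearI) (simp_all add: vec_eq_iff algebra_simps)
  then show ?thesis using linear_conv_bounded_linear by blast
qed

lemma summable_mat:
  fixes f :: "nat \<Rightarrow> complex^'n^'n"
  assumes "\<And>k. spec_norm (f k) \<le> g k" "summable g"
  shows "summable f"
proof (rule summable_comparison_test)
  show "\<exists>N. \<forall>n\<ge>N. norm (f n) \<le> real CARD('n) * real CARD('n) * g n"
    using norm_le_spec assms(1) by (meson mult_left_mono of_nat_0_le_iff order_trans zero_le_mult_iff)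
  show "summable (\<lambda>n. real CARD('n) * real CARD('n) * g n)" by (intro summable_mult assms)
qed

lemma suminf_mv:
  fixes f :: "nat \<Rightarrow> complex^'n^'n"
  assumes "summable f"
  shows "suminf f *v x = (\<Sum>k. f k *v x)" "summable (\<lambda>k. f k *v x)"
  using bounded_linear.suminf[OF mv_left_bl assms] bounded_linear.summable[OF mv_left_bl assms] by auto

lemma spec_norm_suminf:
  fixes f :: "nat \<Rightarrow> complex^'n^'n"
  assumes fg: "\<And>k. spec_norm (f k) \<le> g k" and g: "summable g"
  shows "spec_norm (suminf f) \<le> suminf g"
proof (rule spec_norm_le)
  fix x
  have sf: "summable f" by (rule summable_mat[OF fg g])
  have b: "norm (f k *v x) \<le> g k * norm x" for k
    using spec_norm_bound[of "f k" x] fg[of k] by (meson mult_right_mono norm_ge_zero order_trans)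
  have sn: "summable (\<lambda>k. norm (f k *v x))"
    by (rule summable_comparison_test[OF _ summable_mult2[OF g]]) (use b in auto)
  have "norm (suminf f *v x) = norm (\<Sum>k. f k *v x)" using suminf_mv(1)[OF sf] by simp
  also have "\<dots> \<le> (\<Sum>k. norm (f k *v x))" by (rule summable_norm[OF sn])
  also have "\<dots> \<le> (\<Sum>k. g k * norm x)" by (rule suminf_le[OF b sn summable_mult2[OF g]])
  also have "\<dots> = suminf g * norm x" by (rule suminf_mult2[OF g, symmetric])
  finally show "norm (suminf f *v x) \<le> suminf g * norm x" .
qed

lemma mexp_summable: "summable (\<lambda>k. cscale (1 / of_nat (fact k)) (mpow (A::complex^'n^'n) k))"
proof (rule summable_mat)
  fix k
  show "spec_norm (cscale (1 / of_nat (fact k)) (mpow A k)) \<le> inverse (fact k) * spec_norm A ^ k"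
  proof -
    have "cmod (1 / of_nat (fact k) :: complex) = inverse (fact k)"
      by (simp add: norm_divide divide_inverse norm_inverse)
    then show ?thesis
      using spec_norm_cscale[of "1 / of_nat (fact k)" "mpow A k"] spec_norm_mpow[of A k]
      by (metis mult_left_mono order_trans norm_ge_zero)
  qed
  show "summable (\<lambda>k. inverse (fact k) * spec_norm A ^ k)" by (rule summable_exp)
qed

lemma sums_svec: "f sums s \<Longrightarrow> (\<lambda>k. f k *s (v::complex^'n)) sums (s *s v)"
  using bounded_linear.sums[OF svec_bl] by blast

lemma mexp_eigen:
  fixes A :: "complex^'n^'n"
  assumes "A *v v = c *s v"
  shows "mexp A *v v = exp c *s v"
proof -
  have "mexp A *v v = (\<Sum>k. cscale (1 / of_nat (fact k)) (mpow A k) *v v)"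
    unfolding mexp_def by (rule suminf_mv(1)[OF mexp_summable])
  also have "\<dots> = (\<Sum>k. (c^k /\<^sub>R fact k) *s v)"
    by (simp add: cscale_mv mpow_eigen[OF assms] scaleR_conv_of_real divide_inverse mult_ac)
  also have "\<dots> = exp c *s v" using sums_svec[OF exp_converges] by (rule sums_unique[symmetric])
  finally show ?thesis .
qed

lemma cmod_a: "cmod ((-1)^k / of_nat (Suc k) :: complex) = 1 / real (Suc k)"
  by (simp only: norm_divide norm_power norm_minus_cancel norm_one power_one norm_of_nat)

lemma cmod_a': "cmod ((-1)^k / (1 + of_nat k) :: complex) = 1 / (1 + real k)"
  using cmod_a[of k] by simp

lemma mlog_summable:
  fixes M :: "complex^'n^'n"
  assumes "spec_norm (M - mat 1) < 1"
  shows "summable (\<lambda>k. cscale ((-1) ^ k / of_nat (Suc k)) (mpow (M - mat 1) (Suc k)))"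
proof (rule summable_mat)
  fix k
  let ?r = "spec_norm (M - mat 1)"
  have "spec_norm (cscale ((-1) ^ k / of_nat (Suc k)) (mpow (M - mat 1) (Suc k)))
      \<le> cmod ((-1) ^ k / of_nat (Suc k)) * spec_norm (mpow (M - mat 1) (Suc k))" by (rule spec_norm_cscale)
  also have "\<dots> \<le> 1 * ?r ^ Suc k"
    by (intro mult_mono spec_norm_mpow spec_norm_nonneg) (auto simp: cmod_a')
  finally show "spec_norm (cscale ((-1) ^ k / of_nat (Suc k)) (mpow (M - mat 1) (Suc k))) \<le> ?r ^ Suc k" by simp
  show "summable (\<lambda>k. ?r ^ Suc k)" using assms spec_norm_nonneg[of "M - mat 1"]
    by (simp add: summable_mult)
qed

lemma mlog_eigen:
  fixes M :: "complex^'n^'n"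
  assumes M: "spec_norm (M - mat 1) < 1" and ev: "M *v v = c *s v" and c: "cmod (c - 1) < 1"
  shows "mlog M *v v = Ln c *s v"
proof -
  have evN: "(M - mat 1) *v v = (c - 1) *s v" using ev by (simp add: matrix_vector_mult_diff_rdistrib vec.scale algebra_simps)
  have "mlog M *v v = (\<Sum>k. cscale ((-1) ^ k / of_nat (Suc k)) (mpow (M - mat 1) (Suc k)) *v v)"
    unfolding mlog_def by (rule suminf_mv(1)[OF mlog_summable[OF M]])
  also have "\<dots> = (\<Sum>k. ((-1) ^ k / of_nat (Suc k) * (c - 1) ^ Suc k) *s v)"
    by (simp only: cscale_mv mpow_eigen[OF evN] vector_smult_assoc)
  also have "\<dots> = Ln c *s v"
  proof -
    have h: "(\<lambda>n. - ((-(c-1))^n) / of_nat n) sums Ln c" using Ln_series'[OF c] by simp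
    have "(\<lambda>n. - ((-(c-1))^(Suc n)) / of_nat (Suc n)) sums Ln c"
      by (subst sums_Suc_iff) (use h in simp)
    moreover have "- ((-(c-1))^(Suc n)) / of_nat (Suc n) = (-1) ^ n / of_nat (Suc n) * (c - 1) ^ Suc n" for n
      by (subst power_minus) (simp add: field_simps)
    ultimately have "(\<lambda>n. (-1) ^ n / of_nat (Suc n) * (c - 1) ^ Suc n) sums Ln c" by simp
    from sums_svec[OF this] show ?thesis by (rule sums_unique[symmetric])
  qed
  finally show ?thesis .
qed

lemma mpow_diff_bound:
  fixes P Q :: "complex^'n^'n"
  assumes P: "spec_norm P \<le> r" and Q: "spec_norm Q \<le> r"
  shows "spec_norm (mpow P (Suc k) - mpow Q (Suc k)) \<le> real (Suc k) * r ^ k * spec_norm (P - Q)"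
proof (induction k)
  case 0
  show ?case by simp
next
  case (Suc k)
  have r0: "0 \<le> r" using P spec_norm_nonneg order_trans by blast
  show ?case
  proof (rule spec_norm_le)
    fix x
    have eq: "(mpow P (Suc (Suc k)) - mpow Q (Suc (Suc k))) *v x
        = P *v ((mpow P (Suc k) - mpow Q (Suc k)) *v x) + (P - Q) *v (mpow Q (Suc k) *v x)"
      by (simp add: matrix_vector_mul_assoc[symmetric] matrix_vector_mult_diff_distrib matrix_vector_mult_diff_rdistrib)
    have "norm (P *v ((mpow P (Suc k) - mpow Q (Suc k)) *v x)) \<le> r * (real (Suc k) * r ^ k * spec_norm (P - Q) * norm x)"
      using spec_norm_bound[of P] spec_norm_bound[of "mpow P (Suc k) - mpow Q (Suc k)" x] Suc P r0
      by (meson mult_mono norm_ge_zero order_trans spec_norm_nonneg mult_right_mono)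
    moreover have "norm ((P - Q) *v (mpow Q (Suc k) *v x)) \<le> spec_norm (P - Q) * (r ^ Suc k * norm x)"
    proof -
      have "norm (mpow Q (Suc k) *v x) \<le> r ^ Suc k * norm x"
        using spec_norm_bound[of "mpow Q (Suc k)" x] spec_norm_mpow[of Q "Suc k"] power_mono[OF Q spec_norm_nonneg, of "Suc k"]
        by (meson mult_right_mono norm_ge_zero order_trans)
      then show ?thesis using spec_norm_bound[of "P - Q"] by (meson mult_left_mono order_trans spec_norm_nonneg)
    qed
    ultimately have "norm ((mpow P (Suc (Suc k)) - mpow Q (Suc (Suc k))) *v x)
        \<le> r * (real (Suc k) * r ^ k * spec_norm (P - Q) * norm x) + spec_norm (P - Q) * (r ^ Suc k * norm x)"
      unfolding eq by (meson add_mono norm_triangle_ineq order_trans)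
    also have "\<dots> = real (Suc (Suc k)) * r ^ Suc k * spec_norm (P - Q) * norm x"
      by (simp add: algebra_simps)
    finally show "norm ((mpow P (Suc (Suc k)) - mpow Q (Suc (Suc k))) *v x) \<le> real (Suc (Suc k)) * r ^ Suc k * spec_norm (P - Q) * norm x" .
  qed
qed

lemma mlog_lipschitz:
  fixes X Y :: "complex^'n^'n"
  assumes X: "spec_norm (X - mat 1) \<le> r" and Y: "spec_norm (Y - mat 1) \<le> r" and r: "r < 1"
  shows "spec_norm (mlog X - mlog Y) \<le> spec_norm (X - Y) / (1 - r)"
proof -
  let ?P = "X - mat 1" and ?Q = "Y - mat 1"
  let ?a = "\<lambda>k. (-1) ^ k / of_nat (Suc k) :: complex"
  have r0: "0 \<le> r" using X spec_norm_nonneg order_trans by blast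
  have sX: "summable (\<lambda>k. cscale (?a k) (mpow ?P (Suc k)))" by (rule mlog_summable) (use X r in auto)
  have sY: "summable (\<lambda>k. cscale (?a k) (mpow ?Q (Suc k)))" by (rule mlog_summable) (use Y r in auto)
  have PQ: "?P - ?Q = X - Y" by simp
  have "mlog X - mlog Y = (\<Sum>k. cscale (?a k) (mpow ?P (Suc k)) - cscale (?a k) (mpow ?Q (Suc k)))"
    unfolding mlog_def by (rule suminf_diff[OF sX sY])
  also have "spec_norm \<dots> \<le> (\<Sum>k. r ^ k * spec_norm (X - Y))"
  proof (rule spec_norm_suminf)
    fix k
    have "cscale (?a k) (mpow ?P (Suc k)) - cscale (?a k) (mpow ?Q (Suc k)) = cscale (?a k) (mpow ?P (Suc k) - mpow ?Q (Suc k))"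
      by (simp add: cscale_def vec_eq_iff algebra_simps)
    then have "spec_norm (cscale (?a k) (mpow ?P (Suc k)) - cscale (?a k) (mpow ?Q (Suc k)))
        \<le> cmod (?a k) * spec_norm (mpow ?P (Suc k) - mpow ?Q (Suc k))" using spec_norm_cscale by metis
    also have "\<dots> \<le> (1 / real (Suc k)) * (real (Suc k) * r ^ k * spec_norm (X - Y))"
      by (intro mult_mono mpow_diff_bound[OF X Y, of k, unfolded PQ]) (auto simp: cmod_a' spec_norm_nonneg)
    also have "\<dots> = r ^ k * spec_norm (X - Y)" by simp
    finally show "spec_norm (cscale (?a k) (mpow ?P (Suc k)) - cscale (?a k) (mpow ?Q (Suc k))) \<le> r ^ k * spec_norm (X - Y)" .
    show "summable (\<lambda>k. r ^ k * spec_norm (X - Y))" using r r0 by (intro summable_mult2) simp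
  qed
  also have "\<dots> = spec_norm (X - Y) / (1 - r)"
    using r r0 suminf_mult2[of "\<lambda>k. r ^ k" "spec_norm (X - Y)"] suminf_geometric[of r] by simp
  finally show ?thesis .
qed

lemma orthonormal_norm: "orthonormal v m \<Longrightarrow> i < m \<Longrightarrow> norm (v i) = 1"
proof -
  assume "orthonormal v m" "i < m"
  then have "cinner (v i) (v i) = 1" unfolding orthonormal_def by simp
  then have "(norm (v i))^2 = 1" using cinner_self[of "v i"] by (metis of_real_eq_1_iff)
  then show ?thesis by (metis real_sqrt_abs abs_norm_cancel real_sqrt_one)
qed

lemma coeff_diag:
  fixes v :: "nat \<Rightarrow> complex^'n"
  assumes on: "orthonormal v CARD('n)" and ev: "\<And>i. i < CARD('n) \<Longrightarrow> M *v v i = z i *s v i"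
    and k: "k < CARD('n)"
  shows "cinner (v k) (M *v x) = z k * cinner (v k) x"
proof -
  have "M *v x = M *v (\<Sum>i<CARD('n). cinner (v i) x *s v i)"
    by (rule arg_cong[where f="\<lambda>y. M *v y", OF parseval_expand[OF on]])
  also have "\<dots> = (\<Sum>i<CARD('n). (cinner (v i) x * z i) *s v i)"
    by (simp add: vec.sum vec.scale ev)
  finally have "cinner (v k) (M *v x) = (\<Sum>i<CARD('n). cinner (v i) x * z i * cinner (v k) (v i))"
    by (simp add: cinner_sum_right cinner_scale_right)
  also have "\<dots> = (\<Sum>i<CARD('n). if i = k then cinner (v i) x * z i else 0)"
    by (rule sum.cong) (use on k in \<open>auto simp: orthonormal_def\<close>)
  finally show ?thesis using k by simp
qed

lemma diag_bound:
  fixes v :: "nat \<Rightarrow> complex^'n"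
  assumes on: "orthonormal v CARD('n)" and ev: "\<And>i. i < CARD('n) \<Longrightarrow> M *v v i = z i *s v i"
    and zK: "\<And>i. i < CARD('n) \<Longrightarrow> cmod (z i) \<le> K" and K: "0 \<le> K"
  shows "spec_norm M \<le> K"
proof (rule spec_norm_le)
  fix x
  have "(norm (M *v x))^2 = (\<Sum>i<CARD('n). (cmod (cinner (v i) (M *v x)))^2)" by (rule parseval_norm[OF on])
  also have "\<dots> = (\<Sum>i<CARD('n). (cmod (z i))^2 * (cmod (cinner (v i) x))^2)"
    by (rule sum.cong) (auto simp: coeff_diag[OF on ev] norm_mult power_mult_distrib)
  also have "\<dots> \<le> (\<Sum>i<CARD('n). K^2 * (cmod (cinner (v i) x))^2)"
    by (intro sum_mono mult_right_mono power_mono zK) auto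
  also have "\<dots> = (K * norm x)^2" by (simp add: parseval_norm[OF on] sum_distrib_left power_mult_distrib)
  finally show "norm (M *v x) \<le> K * norm x"
    using K by (meson mult_nonneg_nonneg norm_ge_zero power2_le_imp_le)
qed

lemma mat_eq_basis:
  fixes v :: "nat \<Rightarrow> complex^'n" and A B :: "complex^'n^'n"
  assumes on: "orthonormal v CARD('n)" and eq: "\<And>i. i < CARD('n) \<Longrightarrow> A *v v i = B *v v i"
  shows "A = B"
proof -
  have "A *v x = B *v x" for x
  proof -
    have "A *v x = A *v (\<Sum>i<CARD('n). cinner (v i) x *s v i)"
      by (rule arg_cong[where f="\<lambda>y. A *v y", OF parseval_expand[OF on]])
    also have "\<dots> = B *v (\<Sum>i<CARD('n). cinner (v i) x *s v i)"
      by (simp add: vec.sum vec.scale eq)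
    also have "\<dots> = B *v x"
      by (rule arg_cong[where f="\<lambda>y. B *v y", OF parseval_expand[OF on, symmetric]])
    finally show ?thesis .
  qed
  then show ?thesis by (simp add: matrix_eq)
qed

lemma cscale_cscale: "cscale a (cscale b M) = cscale (a * b) M"
  by (simp add: cscale_def vec_eq_iff mult.assoc)
lemma cscale_one: "cscale 1 M = M"
  by (simp add: cscale_def vec_eq_iff)
lemma cscale_diff: "cscale a (X - Y) = cscale a X - cscale a Y"
  by (simp add: cscale_def vec_eq_iff algebra_simps)

lemma hermitian_add: "hermitian A \<Longrightarrow> hermitian B \<Longrightarrow> hermitian (A + B)"
  unfolding hermitian_def adjoint_mat_def by (simp add: vec_eq_iff)

lemma spec_norm_commute: "spec_norm (A - B) = spec_norm (B - A)"
proof -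
  have "spec_norm (A - B) \<le> spec_norm (B - A)" for A B :: "complex^'n^'n"
  proof (rule spec_norm_le)
    fix x
    have "(A - B) *v x = - ((B - A) *v x)" by (simp add: matrix_vector_mult_diff_rdistrib)
    then show "norm ((A - B) *v x) \<le> spec_norm (B - A) * norm x" using spec_norm_bound[of "B - A" x] by simp
  qed
  then show ?thesis by (meson antisym)
qed

lemma gap_le:
  assumes sorted: "\<forall>i j. i \<le> j \<and> j < d \<longrightarrow> lam i \<le> (lam j::real)"
    and k: "k < d" "k \<noteq> j" and j: "j < d"
  shows "gap d lam j \<le> ereal \<bar>lam j - lam k\<bar>"
proof (cases "k < j")
  case True
  then have "j \<noteq> 0" by simp
  have kj: "k \<le> j - 1 \<and> j - 1 < d" using True j by auto
  have l1: "lam k \<le> lam (j - 1)" using sorted kj by blast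
  have l2: "lam (j - 1) \<le> lam j" using sorted[rule_format, of "j - 1" j] True j by auto
  from l1 l2 have "\<bar>lam j - lam (j - 1)\<bar> \<le> \<bar>lam j - lam k\<bar>" by simp
  then show ?thesis unfolding gap_def using \<open>j \<noteq> 0\<close> by (simp add: min.coboundedI1)
next
  case False
  then have jk: "j < k" using k by simp
  then have "j + 1 \<noteq> d" using k by simp
  have l1: "lam (j+1) \<le> lam k" using sorted[rule_format, of "j + 1" k] jk k by auto
  have l2: "lam j \<le> lam (j + 1)" using sorted[rule_format, of j "j + 1"] jk k by auto
  from l1 l2 have "\<bar>lam j - lam (j + 1)\<bar> \<le> \<bar>lam j - lam k\<bar>" by simp
  then show ?thesis unfolding gap_def using \<open>j + 1 \<noteq> d\<close> by (simp add: min.coboundedI2)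
qed

lemma quad_lower:
  fixes a :: "nat \<Rightarrow> complex^'n"
  assumes ona: "orthonormal a CARD('n)" and eva: "\<And>i. i < CARD('n) \<Longrightarrow> A *v a i = complex_of_real (al i) *s a i"
    and sa: "\<forall>i j. i \<le> j \<and> j < CARD('n) \<longrightarrow> al i \<le> al j"
    and z: "\<And>i. i < j \<Longrightarrow> cinner (a i) x = 0" and j: "j < CARD('n)"
  shows "al j * (norm x)^2 \<le> Re (cinner x (A *v x))"
proof -
  have "al j * (norm x)^2 = (\<Sum>i<CARD('n). al j * (cmod (cinner (a i) x))^2)"
    by (simp add: parseval_norm[OF ona] sum_distrib_left)
  also have "\<dots> \<le> (\<Sum>i<CARD('n). al i * (cmod (cinner (a i) x))^2)"
  proof (rule sum_mono)
    fix i assume i: "i \<in> {..<CARD('n)}"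
    show "al j * (cmod (cinner (a i) x))^2 \<le> al i * (cmod (cinner (a i) x))^2"
    proof (cases "i < j")
      case True then show ?thesis using z by simp
    next
      case False then have "al j \<le> al i" using sa i by auto
      then show ?thesis by (intro mult_right_mono) auto
    qed
  qed
  also have "\<dots> = Re (cinner x (A *v x))" by (simp add: quad_form[OF ona eva])
  finally show ?thesis .
qed

lemma quad_upper:
  fixes b :: "nat \<Rightarrow> complex^'n"
  assumes onb: "orthonormal b CARD('n)" and evb: "\<And>i. i < CARD('n) \<Longrightarrow> B *v b i = complex_of_real (be i) *s b i"
    and sb: "\<forall>i j. i \<le> j \<and> j < CARD('n) \<longrightarrow> be i \<le> be j"
    and z: "\<And>i. j < i \<Longrightarrow> i < CARD('n) \<Longrightarrow> cinner (b i) x = 0" and j: "j < CARD('n)"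
  shows "Re (cinner x (B *v x)) \<le> be j * (norm x)^2"
proof -
  have "Re (cinner x (B *v x)) = (\<Sum>i<CARD('n). be i * (cmod (cinner (b i) x))^2)"
    by (simp add: quad_form[OF onb evb])
  also have "\<dots> \<le> (\<Sum>i<CARD('n). be j * (cmod (cinner (b i) x))^2)"
  proof (rule sum_mono)
    fix i assume i: "i \<in> {..<CARD('n)}"
    show "be i * (cmod (cinner (b i) x))^2 \<le> be j * (cmod (cinner (b i) x))^2"
    proof (cases "j < i")
      case True then show ?thesis using z i by simp
    next
      case False then have "be i \<le> be j" using sb j by auto
      then show ?thesis by (intro mult_right_mono) auto
    qed
  qed
  also have "\<dots> = be j * (norm x)^2"
    by (simp add: parseval_norm[OF onb] sum_distrib_left)
  finally show ?thesis .
qed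

lemma weyl_half:
  fixes A B :: "complex^'n^'n" and a b :: "nat \<Rightarrow> complex^'n"
  assumes ona: "orthonormal a CARD('n)" and eva: "\<And>i. i < CARD('n) \<Longrightarrow> A *v a i = complex_of_real (al i) *s a i"
    and sa: "\<forall>i j. i \<le> j \<and> j < CARD('n) \<longrightarrow> al i \<le> al j"
    and onb: "orthonormal b CARD('n)" and evb: "\<And>i. i < CARD('n) \<Longrightarrow> B *v b i = complex_of_real (be i) *s b i"
    and sb: "\<forall>i j. i \<le> j \<and> j < CARD('n) \<longrightarrow> be i \<le> be j"
    and AB: "spec_norm (A - B) \<le> \<delta>" and j: "j < CARD('n)"
  shows "al j \<le> be j + \<delta>"
proof -
  define w where "w k = (if k < j then a k else b (k + 1))" for k
  obtain x where x0: "x \<noteq> 0" and xw: "\<forall>k<CARD('n) - 1. cinner (w k) x = 0"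
    using ex_orth[of "CARD('n) - 1" w] by auto
  have za: "cinner (a i) x = 0" if "i < j" for i
    using xw[rule_format, of i] that j by (simp add: w_def)
  have zb: "cinner (b i) x = 0" if "j < i" "i < CARD('n)" for i
  proof -
    have "i - 1 < CARD('n) - 1" "\<not> (i - 1 < j)" "i - 1 + 1 = i" using that by auto
    then show ?thesis using xw[rule_format, of "i - 1"] by (simp add: w_def)
  qed
  have l: "al j * (norm x)^2 \<le> Re (cinner x (A *v x))" by (rule quad_lower[OF ona eva sa za j])
  have u: "Re (cinner x (B *v x)) \<le> be j * (norm x)^2" by (rule quad_upper[OF onb evb sb zb j])
  have "Re (cinner x (A *v x)) - Re (cinner x (B *v x)) = Re (cinner x ((A - B) *v x))"
    by (simp add: matrix_vector_mult_diff_rdistrib cinner_diff_right)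
  also have "\<dots> \<le> cmod (cinner x ((A - B) *v x))" by (rule complex_Re_le_cmod)
  also have "\<dots> \<le> norm x * norm ((A - B) *v x)" by (rule cauchy_schwarz)
  also have "\<dots> \<le> norm x * (spec_norm (A - B) * norm x)" by (intro mult_left_mono spec_norm_bound) auto
  also have "\<dots> \<le> norm x * (\<delta> * norm x)" by (intro mult_left_mono mult_right_mono AB) auto
  finally have "al j * (norm x)^2 \<le> be j * (norm x)^2 + \<delta> * (norm x)^2"
    using l u by (simp add: power2_eq_square mult_ac)
  then have "al j * (norm x)^2 \<le> (be j + \<delta>) * (norm x)^2" by (simp add: algebra_simps)
  moreover have "0 < (norm x)^2" using x0 by simp
  ultimately show ?thesis by simp
qed

lemma eigvec_bound:
  fixes A B :: "complex^'n^'n" and phi :: "nat \<Rightarrow> complex^'n"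
  assumes h: "hermitian A" and on: "orthonormal phi CARD('n)"
    and ev: "\<And>i. i < CARD('n) \<Longrightarrow> A *v phi i = complex_of_real (lam i) *s phi i"
    and By: "B *v y = complex_of_real mu *s y" and ny: "norm y = 1"
    and AB: "spec_norm (A - B) \<le> \<delta>" and j: "j < CARD('n)"
    and g: "0 \<le> g" and gk: "\<And>k. k < CARD('n) \<Longrightarrow> k \<noteq> j \<Longrightarrow> g \<le> \<bar>lam k - mu\<bar>"
  shows "(\<Sum>k\<in>{..<CARD('n)} - {j}. (cmod (cinner (phi k) y))^2) = 1 - (cmod (cinner (phi j) y))^2"
    and "g^2 * (\<Sum>k\<in>{..<CARD('n)} - {j}. (cmod (cinner (phi k) y))^2) \<le> \<delta>^2"
proof -
  let ?c = "\<lambda>k. (cmod (cinner (phi k) y))^2"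
  have "1 = (\<Sum>k<CARD('n). ?c k)" using parseval_norm[OF on, of y] ny by simp
  also have "\<dots> = ?c j + (\<Sum>k\<in>{..<CARD('n)} - {j}. ?c k)" using j by (simp add: sum.remove)
  finally show S: "(\<Sum>k\<in>{..<CARD('n)} - {j}. ?c k) = 1 - ?c j" by simp
  define w where "w = (A - B) *v y"
  have nw: "norm w \<le> \<delta>" using spec_norm_bound[of "A - B" y] AB ny by (simp add: w_def)
  have cw: "cinner (phi k) w = complex_of_real (lam k - mu) * cinner (phi k) y" if k: "k < CARD('n)" for k
  proof -
    have "cinner (phi k) (A *v y) = cinner (A *v phi k) y" using hermitian_cinner[OF h] by simp
    also have "\<dots> = complex_of_real (lam k) * cinner (phi k) y" by (simp add: ev[OF k] cinner_scale_left)
    finally show ?thesis by (simp add: w_def matrix_vector_mult_diff_rdistrib cinner_diff_right By cinner_scale_right algebra_simps)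
  qed
  have "g^2 * (\<Sum>k\<in>{..<CARD('n)} - {j}. ?c k) = (\<Sum>k\<in>{..<CARD('n)} - {j}. g^2 * ?c k)"
    by (simp add: sum_distrib_left)
  also have "\<dots> \<le> (\<Sum>k\<in>{..<CARD('n)} - {j}. (lam k - mu)^2 * ?c k)"
  proof (rule sum_mono)
    fix k assume "k \<in> {..<CARD('n)} - {j}"
    then have "g \<le> \<bar>lam k - mu\<bar>" using gk by auto
    then have "g^2 \<le> (lam k - mu)^2" using g by (metis power2_abs power_mono)
    then show "g^2 * ?c k \<le> (lam k - mu)^2 * ?c k" by (intro mult_right_mono) auto
  qed
  also have "\<dots> \<le> (\<Sum>k<CARD('n). (lam k - mu)^2 * ?c k)"
    by (rule sum_mono2) auto
  also have "\<dots> = (\<Sum>k<CARD('n). (cmod (cinner (phi k) w))^2)"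
    by (rule sum.cong) (auto simp: cw norm_mult power_mult_distrib simp del: of_real_diff)
  also have "\<dots> = (norm w)^2" by (simp add: parseval_norm[OF on])
  also have "\<dots> \<le> \<delta>^2" using nw by (simp add: power_mono)
  finally show "g^2 * (\<Sum>k\<in>{..<CARD('n)} - {j}. ?c k) \<le> \<delta>^2" .
qed

lemma final_arith:
  fixes h d g R :: real
  assumes h: "0 \<le> h" and d: "d \<le> 3/2 * h" and d0: "0 \<le> d" and g: "2 * h < g"
    and R: "0 \<le> R" "R \<le> 1" and key: "(g - d)^2 * R \<le> d^2"
  shows "R \<le> pi * h / (g - 2 * h)"
proof -
  define u where "u = g - 2 * h"
  have u: "0 < u" using g by (simp add: u_def)
  show ?thesis
  proof (cases "u \<le> pi * h")
    case True
    then have "1 \<le> pi * h / u" using u by simp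
    then show ?thesis using R u_def by simp
  next
    case False
    then have hu: "pi * h < u" by simp
    have gd: "u \<le> g - d" using d h by (simp add: u_def)
    have u2: "u^2 \<le> (g - d)^2" using gd u by (intro power_mono) auto
    have "R * u^2 \<le> R * (g - d)^2" using u2 R(1) by (rule mult_left_mono)
    also have "\<dots> \<le> d^2" using key by (simp add: mult.commute)
    also have "\<dots> \<le> (3/2 * h)^2" using d d0 by (intro power_mono) auto
    also have "\<dots> \<le> pi * h * u"
    proof -
      have p: "9/4 \<le> pi * pi" proof - have "3 * 3 \<le> pi * pi" using pi_gt3 by (intro mult_mono) auto then show ?thesis by simp qed
      have "(3/2 * h)^2 = 9/4 * (h * h)" by (simp add: power2_eq_square)
      also have "\<dots> \<le> pi * pi * (h * h)" using p h by (intro mult_right_mono) auto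
      also have "\<dots> = pi * h * (pi * h)" by (simp add: mult_ac)
      also have "\<dots> \<le> pi * h * u" using hu h pi_gt_zero by (intro mult_left_mono) auto
      finally show ?thesis .
    qed
    finally have "R * u^2 \<le> pi * h * u" .
    then have "R * u \<le> pi * h" using u by (simp add: power2_eq_square mult.assoc[symmetric])
    then show ?thesis using u by (simp add: u_def field_simps)
  qed
qed

theorem theorem4:
  fixes H0 Hint Ut :: "complex^'n^'n"
    and lam0 lamt :: "nat \<Rightarrow> real" and phi0 phit :: "nat \<Rightarrow> complex^'n"
    and t \<epsilon> :: real and j :: nat
  assumes "hermitian H0" and "hermitian Hint"
    and "sorted_eigensystem H0 lam0 phi0"
    and "0 < t" and "4 * spec_norm (H0 + Hint) * t \<le> 1"
    and "0 \<le> \<epsilon>" and "\<epsilon> \<le> spec_norm Hint"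
    and "unitary Ut"
    and "spec_norm (Ut - mexp (cscale (- \<i> * complex_of_real t) (H0 + Hint))) \<le> t * \<epsilon> / 9"
    and "t * \<epsilon> / 9 \<le> 1 / 3"
    and "sorted_eigensystem (cscale (\<i> / complex_of_real t) (mlog Ut)) lamt phit"
    and "j < CARD('n)"
    and "gap CARD('n) lam0 j > ereal (2 * spec_norm Hint)"
  shows "ereal ((cmod (cinner (phit j) (phi0 j)))\<^sup>2)
           \<ge> 1 - ereal (pi * spec_norm Hint) / (gap CARD('n) lam0 j - ereal (2 * spec_norm Hint))"
proof -
  note h0 = assms(1) and hi = assms(2) and se0 = assms(3) and t0 = assms(4) and tH = assms(5)
    and e0 = assms(6) and eh = assms(7) and Uclose = assms(9) and tsmall = assms(10)
    and set = assms(11) and j = assms(12) and gapj = assms(13)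
  define H where "H = H0 + Hint"
  define h where "h = spec_norm Hint"
  define Ht where "Ht = cscale (\<i> / complex_of_real t) (mlog Ut)"
  have hH: "hermitian H" unfolding H_def by (rule hermitian_add[OF h0 hi])
  obtain v mu where onv: "orthonormal v CARD('n)"
    and evH: "\<And>i. i < CARD('n) \<Longrightarrow> H *v v i = complex_of_real (mu i) *s v i"
    using spectral[OF hH] by blast
  have mub: "\<bar>mu i\<bar> \<le> spec_norm H" if i: "i < CARD('n)" for i
  proof -
    have "\<bar>mu i\<bar> = norm (H *v v i)" using orthonormal_norm[OF onv i] by (simp add: evH[OF i] norm_cvec_scale)
    also have "\<dots> \<le> spec_norm H * norm (v i)" by (rule spec_norm_bound)
    finally show ?thesis using orthonormal_norm[OF onv i] by simp
  qed
  have tmu: "t * \<bar>mu i\<bar> \<le> 1/4" if i: "i < CARD('n)" for i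
  proof -
    have "t * \<bar>mu i\<bar> \<le> t * spec_norm H" using mub[OF i] t0 by (intro mult_left_mono) auto
    then show ?thesis using tH by (simp add: H_def mult_ac)
  qed
  define c where "c = - \<i> * complex_of_real t"
  define A where "A = cscale c H"
  define V where "V = mexp A"
  define z where "z i = c * complex_of_real (mu i)" for i
  have cz: "cmod (z i) \<le> 1/4" if i: "i < CARD('n)" for i
    using tmu[OF i] t0 by (simp add: z_def c_def norm_mult)
  have evA: "A *v v i = z i *s v i" if i: "i < CARD('n)" for i
    by (simp add: A_def cscale_mv evH[OF i] vector_smult_assoc z_def)
  have evV: "V *v v i = exp (z i) *s v i" if i: "i < CARD('n)" for i
    unfolding V_def by (rule mexp_eigen[OF evA[OF i]])
  have ez: "cmod (exp (z i) - 1) \<le> 3/8" if i: "i < CARD('n)" for i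
  proof -
    have "cmod (exp (z i) - 1) \<le> 3 / 2 * cmod (z i)" using cz[OF i] by (intro norm_exp_bounds(2)) simp
    then show ?thesis using cz[OF i] by simp
  qed
  have evV1: "(V - mat 1) *v v i = (exp (z i) - 1) *s v i" if i: "i < CARD('n)" for i
    by (simp add: matrix_vector_mult_diff_rdistrib evV[OF i] algebra_simps vec_eq_iff)
  have V1: "spec_norm (V - mat 1) \<le> 3/8"
    by (rule diag_bound[OF onv evV1 ez]) auto
  have logV: "mlog V = A"
  proof (rule mat_eq_basis[OF onv])
    fix i assume i: "i < CARD('n)"
    have "mlog V *v v i = Ln (exp (z i)) *s v i"
      by (rule mlog_eigen) (use V1 evV[OF i] ez[OF i] in auto)
    also have "Ln (exp (z i)) = z i"
    proof (rule Ln_exp)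
      have "\<bar>Im (z i)\<bar> \<le> 1/4" using cz[OF i] abs_Im_le_cmod[of "z i"] by linarith
      then show "- pi < Im (z i)" "Im (z i) \<le> pi" using pi_gt3 by auto
    qed
    finally show "mlog V *v v i = A *v v i" using evA[OF i] by simp
  qed
  have UV: "spec_norm (Ut - V) \<le> t * \<epsilon> / 9" using Uclose by (simp add: V_def A_def c_def H_def)
  have U1: "spec_norm (Ut - mat 1) \<le> 17/24"
  proof -
    have "Ut - mat 1 = (Ut - V) + (V - mat 1)" by simp
    then have "spec_norm (Ut - mat 1) \<le> spec_norm (Ut - V) + spec_norm (V - mat 1)" using spec_norm_add by metis
    moreover have "spec_norm (Ut - V) \<le> 1/3" using UV tsmall by linarith
    ultimately show ?thesis using V1 by linarith
  qed
  have L: "spec_norm (mlog Ut - mlog V) \<le> spec_norm (Ut - V) / (1 - 17/24)"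
    by (rule mlog_lipschitz[OF U1]) (use V1 in auto)
  have HtH: "Ht - H = cscale (\<i> / complex_of_real t) (mlog Ut - mlog V)"
  proof -
    have "cscale (\<i> / complex_of_real t) (mlog V) = H"
      using t0 by (simp add: logV A_def cscale_cscale c_def cscale_one)
    then show ?thesis by (simp add: Ht_def cscale_diff)
  qed
  have HtH_b: "spec_norm (Ht - H) \<le> 8/21 * h"
  proof -
    have "spec_norm (Ht - H) \<le> cmod (\<i> / complex_of_real t) * spec_norm (mlog Ut - mlog V)"
      unfolding HtH by (rule spec_norm_cscale)
    also have "\<dots> \<le> (1 / t) * ((t * \<epsilon> / 9) / (1 - 17/24))"
    proof -
      have L': "spec_norm (mlog Ut - mlog V) \<le> (t * \<epsilon> / 9) / (1 - 17/24)"
        by (rule order_trans[OF L divide_right_mono[OF UV]]) simp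
      show ?thesis using t0 L' by (intro mult_mono) (auto simp: norm_divide spec_norm_nonneg)
    qed
    also have "\<dots> = 8/21 * \<epsilon>" using t0 by simp
    also have "\<dots> \<le> 8/21 * h" using eh by (simp add: h_def)
    finally show ?thesis .
  qed
  define \<delta> where "\<delta> = spec_norm (H0 - Ht)"
  have \<delta>b: "\<delta> \<le> 3/2 * h"
  proof -
    have "Ht - H0 = (Ht - H) + Hint" by (simp add: H_def)
    then have "spec_norm (Ht - H0) \<le> spec_norm (Ht - H) + spec_norm Hint" using spec_norm_add by metis
    then have "spec_norm (Ht - H0) \<le> 8/21 * h + h" using HtH_b by (simp add: h_def)
    moreover have "0 \<le> h" by (simp add: h_def spec_norm_nonneg)
    ultimately show ?thesis by (simp add: \<delta>_def spec_norm_commute[of H0])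
  qed
  have \<delta>0: "0 \<le> \<delta>" by (simp add: \<delta>_def spec_norm_nonneg)
  have h0': "0 \<le> h" by (simp add: h_def spec_norm_nonneg)
  from se0 have s0: "\<forall>i j. i \<le> j \<and> j < CARD('n) \<longrightarrow> lam0 i \<le> lam0 j"
    and ev0: "\<And>i. i < CARD('n) \<Longrightarrow> H0 *v phi0 i = complex_of_real (lam0 i) *s phi0 i"
    and on0: "orthonormal phi0 CARD('n)"
    unfolding sorted_eigensystem_def orthonormal_def by auto
  from set have st: "\<forall>i j. i \<le> j \<and> j < CARD('n) \<longrightarrow> lamt i \<le> lamt j"
    and evt: "\<And>i. i < CARD('n) \<Longrightarrow> Ht *v phit i = complex_of_real (lamt i) *s phit i"
    and ont: "orthonormal phit CARD('n)"
    unfolding sorted_eigensystem_def orthonormal_def Ht_def by auto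
  have d1: "spec_norm (H0 - Ht) \<le> \<delta>" unfolding \<delta>_def by (rule order.refl)
  have d2: "spec_norm (Ht - H0) \<le> \<delta>" unfolding \<delta>_def spec_norm_commute[of Ht H0] by (rule order.refl)
  have w1: "lam0 j \<le> lamt j + \<delta>" by (rule weyl_half[OF on0 ev0 s0 ont evt st d1 j])
  have w2: "lamt j \<le> lam0 j + \<delta>" by (rule weyl_half[OF ont evt st on0 ev0 s0 d2 j])
  have ny: "norm (phit j) = 1" by (rule orthonormal_norm[OF ont j])
  define s where "s = (cmod (cinner (phi0 j) (phit j)))^2"
  have s_eq: "(cmod (cinner (phit j) (phi0 j)))^2 = s"
    unfolding s_def by (subst cinner_commute) simp
  define R where "R = (\<Sum>k\<in>{..<CARD('n)} - {j}. (cmod (cinner (phi0 k) (phit j)))^2)"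
  have R1: "R = 1 - s" unfolding R_def s_def
    by (rule eigvec_bound(1)[OF h0 on0 ev0 evt[OF j] ny order.refl j order.refl]) auto
  have R0: "0 \<le> R" unfolding R_def by (intro sum_nonneg) auto
  have s0': "0 \<le> s" by (simp add: s_def)
  show ?thesis
  proof (cases "gap CARD('n) lam0 j")
    case (real \<gamma>)
    have g2: "2 * h < \<gamma>" using gapj real by (simp add: h_def)
    have gk: "\<gamma> - \<delta> \<le> \<bar>lam0 k - lamt j\<bar>" if k: "k < CARD('n)" "k \<noteq> j" for k
    proof -
      have "ereal \<gamma> \<le> ereal \<bar>lam0 j - lam0 k\<bar>" using gap_le[OF s0 k j] real by simp
      then have "\<gamma> \<le> \<bar>lam0 j - lam0 k\<bar>" by simp
      then show ?thesis using w1 w2 by linarith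
    qed
    have key: "(\<gamma> - \<delta>)^2 * R \<le> \<delta>^2" unfolding R_def
      by (rule eigvec_bound(2)[OF h0 on0 ev0 evt[OF j] ny d1 j _ gk]) (use g2 \<delta>b h0' in auto)
    have "R \<le> pi * h / (\<gamma> - 2 * h)"
      by (rule final_arith[OF h0' \<delta>b \<delta>0 g2 R0 _ key]) (use R1 s0' in auto)
    then have "1 - pi * h / (\<gamma> - 2 * h) \<le> s" using R1 by simp
    moreover have "\<gamma> - 2 * h \<noteq> 0" using g2 by simp
    moreover have e: "1 - ereal x = ereal (1 - x)" for x by (simp add: one_ereal_def)
    ultimately show ?thesis using real s_eq by (simp add: h_def e)
  next
    case PInf
    have "{..<CARD('n)} - {j} = {}"
    proof (rule ccontr)
      assume "{..<CARD('n)} - {j} \<noteq> {}"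
      then obtain k where "k < CARD('n)" "k \<noteq> j" by auto
      from gap_le[OF s0 this j] PInf show False by simp
    qed
    then have "R = 0" unfolding R_def by (simp only: sum.empty)
    then have "s = 1" using R1 by simp
    then show ?thesis using PInf s_eq by simp
  next
    case MInf
    then show ?thesis using gapj by simp
  qed
qed

end
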